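(* Let $L$ be an $R_0$-algebra, $k\in[0,1)$, and $\mu:L\to[0,1]$ a fuzzy subset. Then $\mu$ is an $(\in,\in\vee q_k)$-fuzzy fated filter of $L$ if and only if for every $t\in(0,\tfrac{1-k}{2}]$ the level set $U(\mu;t)=\{x\in L\mid \mu(x)\ge t\}$ is either empty or a fated filter of $L$.
   Context: An $R_0$-algebra is a bounded distributive lattice $(L,\wedge,\vee,0,1)$ with an order-reversing involution $\neg$ and a binary operation $\to$ such that for all $x,y,z\in L$: $x\to y=\neg y\to\neg x$; $1\to x=x$; $(y\to z)\wedge((x\to y)\to(x\to z))=y\to z$; $x\to(y\to z)=y\to(x\to z)$; $x\to(y\vee z)=(x\to y)\vee(x\to z)$; $(x\to y)\vee((x\to y)\to(\neg x\vee y))=1$. A fated filter of $L$ is a nonempty subset $A\subseteq L$ with $1\in A$ such that for all $x,y\in L$ and $a\in A$, $a\to((x\to y)\to x)\in A$ implies $x\in A$. For $x\in L$, $t\in(0,1]$: $x_t\in\mu$ iff $\mu(x)\ge t$; $x_t\,q_k\,\mu$ iff $\mu(x)+t+k>1$; $x_t\in\vee q_k\,\mu$ iff $x_t\in\mu$ or $x_t\,q_k\,\mu$. $\mu$ is an $(\in,\in\vee q_k)$-fuzzy fated filter of $L$ if (1) for all $x\in L$, $t\in(0,1]$: $x_t\in\mu\Rightarrow 1_t\in\vee q_k\,\mu$; and (2) for all $x,a,y\in L$, $t,s\in(0,1]$: if $(a\to((x\to y)\to x))_t\in\mu$ and $a_s\in\mu$ then $x_{\min\{t,s\}}\in\vee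 q_k\,\mu$. *)

theory Defs
  imports Complex_Main
begin

definition R0_algebra :: "('a::{distrib_lattice,bounded_lattice} \<Rightarrow> 'a) \<Rightarrow> ('a \<Rightarrow> 'a \<Rightarrow> 'a) \<Rightarrow> bool" where
  "R0_algebra neg imp \<longleftrightarrow>
     (\<forall>x. neg (neg x) = x) \<and>
     (\<forall>x y. x \<le> y \<longrightarrow> neg y \<le> neg x) \<and>
     (\<forall>x y. imp x y = imp (neg y) (neg x)) \<and>
     (\<forall>x. imp top x = x) \<and>
     (\<forall>x y z. inf (imp y z) (imp (imp x y) (imp x z)) = imp y z) \<and>
     (\<forall>x y z. imp x (imp y z) = imp y (imp x z)) \<and>
     (\<forall>x y z. imp x (sup y z) = sup (imp x y) (imp x z)) \<and>
     (\<forall>x y. sup (imp x y) (imp (imp x y) (sup (neg x) y)) = top)"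

definition fated_filter :: "('a::bounded_lattice \<Rightarrow> 'a \<Rightarrow> 'a) \<Rightarrow> 'a set \<Rightarrow> bool" where
  "fated_filter imp A \<longleftrightarrow> A \<noteq> {} \<and> top \<in> A \<and>
     (\<forall>x y a. a \<in> A \<longrightarrow> imp a (imp (imp x y) x) \<in> A \<longrightarrow> x \<in> A)"

definition fp_in :: "('a \<Rightarrow> real) \<Rightarrow> 'a \<Rightarrow> real \<Rightarrow> bool" where
  "fp_in mu x t \<longleftrightarrow> mu x \<ge> t"

definition fp_q :: "real \<Rightarrow> ('a \<Rightarrow> real) \<Rightarrow> 'a \<Rightarrow> real \<Rightarrow> bool" where
  "fp_q k mu x t \<longleftrightarrow> mu x + t + k > 1"

definition fp_in_or_q :: "real \<Rightarrow> ('a \<Rightarrow> real) \<Rightarrow> 'a \<Rightarrow> real \<Rightarrow> bool" where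
  "fp_in_or_q k mu x t \<longleftrightarrow> fp_in mu x t \<or> fp_q k mu x t"

definition in_inq_fuzzy_fated_filter ::
  "('a::bounded_lattice \<Rightarrow> 'a \<Rightarrow> 'a) \<Rightarrow> real \<Rightarrow> ('a \<Rightarrow> real) \<Rightarrow> bool" where
  "in_inq_fuzzy_fated_filter imp k mu \<longleftrightarrow>
     (\<forall>x t. 0 < t \<and> t \<le> 1 \<longrightarrow> fp_in mu x t \<longrightarrow> fp_in_or_q k mu top t) \<and>
     (\<forall>x a y t s. 0 < t \<and> t \<le> 1 \<and> 0 < s \<and> s \<le> 1 \<longrightarrow>
        fp_in mu (imp a (imp (imp x y) x)) t \<longrightarrow> fp_in mu a s \<longrightarrow>
        fp_in_or_q k mu x (min t s))"

definition level_set :: "('a \<Rightarrow> real) \<Rightarrow> real \<Rightarrow> 'a set" where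
  "level_set mu t = {x. mu x \<ge> t}"

end

theory Submission
  imports Defs
begin

lemma lemA:
  assumes F: "in_inq_fuzzy_fated_filter imp k mu" and k: "k < 1"
    and mu: "\<forall>x. 0 \<le> mu x \<and> mu x \<le> 1"
  shows "mu top \<ge> min (mu x) ((1-k)/2)"
proof (rule ccontr)
  assume c: "\<not> ?thesis"
  define m where "m = min (mu x) ((1-k)/2)"
  define t where "t = (mu top + m)/2"
  have "0 \<le> mu top" "mu x \<le> 1" using mu by auto
  moreover have "mu top < m" using c unfolding m_def by (simp only: not_le)
  moreover have "m \<le> mu x" "m \<le> (1-k)/2" unfolding m_def by (meson min.cobounded1 min.cobounded2 order_trans)+
  ultimately have t0: "0 < t" "t \<le> 1" "t \<le> mu x" "mu top < t" "t < (1-k)/2"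
    unfolding t_def by auto
  have "fp_in_or_q k mu top t" using F t0 unfolding in_inq_fuzzy_fated_filter_def fp_in_def by blast
  thus False using t0 unfolding fp_in_or_q_def fp_in_def fp_q_def by auto
qed

lemma lemB:
  assumes F: "in_inq_fuzzy_fated_filter imp k mu" and k: "k < 1"
    and mu: "\<forall>x. 0 \<le> mu x \<and> mu x \<le> 1"
  shows "mu x \<ge> min (min (mu (imp a (imp (imp x y) x))) (mu a)) ((1-k)/2)"
proof (rule ccontr)
  assume c: "\<not> ?thesis"
  define m where "m = min (min (mu (imp a (imp (imp x y) x))) (mu a)) ((1-k)/2)"
  define t where "t = (mu x + m)/2"
  have "0 \<le> mu x" "mu a \<le> 1" using mu by auto
  moreover have "mu x < m" using c unfolding m_def by (simp only: not_le)
  moreover have "m \<le> mu a" "m \<le> mu (imp a (imp (imp x y) x))" "m \<le> (1-k)/2" unfolding m_def by (meson min.cobounded1 min.cobounded2 order_trans)+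
  ultimately have t0: "0 < t" "t \<le> 1" "t \<le> mu a" "t \<le> mu (imp a (imp (imp x y) x))" "mu x < t" "t < (1-k)/2"
    unfolding t_def by auto
  have "fp_in_or_q k mu x (min t t)" using F t0 unfolding in_inq_fuzzy_fated_filter_def fp_in_def by blast
  thus False using t0 unfolding fp_in_or_q_def fp_in_def fp_q_def by auto
qed

theorem theorem3p12:
  fixes neg :: "'a::{distrib_lattice,bounded_lattice} \<Rightarrow> 'a"
    and imp :: "'a \<Rightarrow> 'a \<Rightarrow> 'a"
    and k :: real and mu :: "'a \<Rightarrow> real"
  assumes "R0_algebra neg imp"
    and "0 \<le> k" and "k < 1"
    and "\<forall>x. 0 \<le> mu x \<and> mu x \<le> 1"
  shows "in_inq_fuzzy_fated_filter imp k mu \<longleftrightarrow>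
    (\<forall>t. 0 < t \<and> t \<le> (1 - k) / 2 \<longrightarrow>
       level_set mu t = {} \<or> fated_filter imp (level_set mu t))"
proof
  assume F: "in_inq_fuzzy_fated_filter imp k mu"
  note A = lemA[OF F assms(3,4)] and B = lemB[OF F assms(3,4)]
  show "\<forall>t. 0 < t \<and> t \<le> (1 - k) / 2 \<longrightarrow>
       level_set mu t = {} \<or> fated_filter imp (level_set mu t)"
  proof (intro allI impI)
    fix t assume t: "0 < t \<and> t \<le> (1 - k) / 2"
    show "level_set mu t = {} \<or> fated_filter imp (level_set mu t)"
    proof (cases "level_set mu t = {}")
      case False
      then obtain x where "mu x \<ge> t" unfolding level_set_def by auto
      hence "t \<le> min (mu x) ((1-k)/2)" using t by simp
      hence "mu top \<ge> t" using A[of x] by linarith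
      moreover have "\<forall>x y a. a \<in> level_set mu t \<longrightarrow> imp a (imp (imp x y) x) \<in> level_set mu t \<longrightarrow> x \<in> level_set mu t"
      proof (intro allI impI)
        fix x y a assume "a \<in> level_set mu t" "imp a (imp (imp x y) x) \<in> level_set mu t"
        hence "t \<le> min (min (mu (imp a (imp (imp x y) x))) (mu a)) ((1-k)/2)"
          using t unfolding level_set_def by simp
        hence "t \<le> mu x" using B[of a x y] by (meson order_trans)
        thus "x \<in> level_set mu t" unfolding level_set_def by simp
      qed
      moreover have "top \<in> level_set mu t" using calculation(1) unfolding level_set_def by simp
      ultimately show ?thesis using False unfolding fated_filter_def by blast
    qed simp
  qed
next
  assume H: "\<forall>t. 0 < t \<and> t \<le> (1 - k) / 2 \<longrightarrow>
       level_set mu t = {} \<or> fated_filter imp (level_set mu t)"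
  have H': "fated_filter imp (level_set mu t)" if "0 < t" "t \<le> (1-k)/2" "mu x \<ge> t" for t x
    using H that unfolding level_set_def by blast
  have k2: "0 < (1-k)/2" using assms(3) by simp
  show "in_inq_fuzzy_fated_filter imp k mu"
    unfolding in_inq_fuzzy_fated_filter_def
  proof (intro conjI allI impI)
    fix x t assume t: "0 < t \<and> t \<le> 1" and x: "fp_in mu x t"
    show "fp_in_or_q k mu top t"
    proof (cases "t \<le> (1-k)/2")
      case True
      have "top \<in> level_set mu t" using H'[OF _ True, of x] t x
        unfolding fated_filter_def fp_in_def by blast
      thus ?thesis unfolding level_set_def fp_in_or_q_def fp_in_def by simp
    next
      case False
      have mx: "mu x \<ge> (1-k)/2" using x False unfolding fp_in_def by auto
      have "top \<in> level_set mu ((1-k)/2)" using H'[OF k2 order_refl mx]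
        unfolding fated_filter_def by blast
      hence "mu top \<ge> (1-k)/2" unfolding level_set_def by simp
      thus ?thesis using False unfolding fp_in_or_q_def fp_q_def by auto
    qed
  next
    fix x a y t s
    assume ts: "0 < t \<and> t \<le> 1 \<and> 0 < s \<and> s \<le> 1"
      and b: "fp_in mu (imp a (imp (imp x y) x)) t" and a: "fp_in mu a s"
    define r where "r = min t s"
    have r: "0 < r" "mu a \<ge> r" "mu (imp a (imp (imp x y) x)) \<ge> r"
      using ts a b unfolding r_def fp_in_def by auto
    show "fp_in_or_q k mu x (min t s)"
    proof (cases "r \<le> (1-k)/2")
      case True
      have m: "a \<in> level_set mu r" "imp a (imp (imp x y) x) \<in> level_set mu r"
        using r unfolding level_set_def by simp_all
      have "x \<in> level_set mu r" using H'[OF r(1) True r(2)] m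
        unfolding fated_filter_def by blast
      hence "mu x \<ge> r" unfolding level_set_def by simp
      thus ?thesis unfolding r_def fp_in_or_q_def fp_in_def by auto
    next
      case False
      have "mu a \<ge> (1-k)/2" "mu (imp a (imp (imp x y) x)) \<ge> (1-k)/2" using r False by auto
      hence m: "a \<in> level_set mu ((1-k)/2)" "imp a (imp (imp x y) x) \<in> level_set mu ((1-k)/2)"
        unfolding level_set_def by simp_all
      have "x \<in> level_set mu ((1-k)/2)" using H'[OF k2 order_refl \<open>mu a \<ge> (1-k)/2\<close>] m
        unfolding fated_filter_def by blast
      hence "mu x \<ge> (1-k)/2" unfolding level_set_def by simp
      thus ?thesis using False unfolding r_def fp_in_or_q_def fp_q_def by auto
    qed
  qed
qed

end
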